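(* Let $m$, $t$, $c$, $\beta$, $\mathcal{C}_{\mathrm{MU}}$ and the markers be as in the context. A uniformly random string $\mathbf{z}\in\{0,1\}^m$ is legit with probability $1-1/\operatorname{poly}(m)$.
   Context: Logarithms are base 2. Let $t\ge1$ and $m>t$ be integers, let $c\ge 3$ be an integer, and let $\beta=32$. A mutually uncorrelated (MU) code is a set of binary strings of equal length such that no nonempty proper prefix of any codeword equals a suffix of any (possibly the same) codeword. Let $\mathcal{C}_{\mathrm{MU}}$ be an MU code of length $c\log m$ with $|\mathcal{C}_{\mathrm{MU}}|\ge \frac{2^{c\log m}}{\beta c\log m}$. The markers $\mathbf{m}_0,\ldots,\mathbf{m}_t$ are the $t+1$ lexicographically first codewords of $\mathcal{C}_{\mathrm{MU}}$. For $\mathbf{z}\in\{0,1\}^m$, any occurrence (as a contiguous substring) of a codeword of $\mathcal{C}_{\mathrm{MU}}$ in $\mathbf{z}$ is called a level-$0$ signature. A string $\mathbf{z}\in\{0,1\}^m$ is legit if: (I) every interval (contiguous substring) of $\mathbf{z}$ of length $2\beta c\log^2 m+c\log m-1$ contains a level-$0$ signature; (II) every two non-overlapping substrings of $\mathbf{z}$ of length $c\log m$ are distinct; (III) $\mathbf{z}$ contains none of the markers $\mathbf{m}_0,\ldots,\mathbf{m}_t$ as a substring. *)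

theory Defs
  imports Complex_Main
begin

definition beta :: nat where "beta = 32"

definition occurs_in :: "bool list \<Rightarrow> bool list \<Rightarrow> bool" where
  "occurs_in w z \<longleftrightarrow> (\<exists>i. i + length w \<le> length z \<and> take (length w) (drop i z) = w)"

definition MU_code :: "nat \<Rightarrow> bool list set \<Rightarrow> bool" where
  "MU_code n C \<longleftrightarrow> (\<forall>a\<in>C. length a = n) \<and>
     (\<forall>a\<in>C. \<forall>b\<in>C. \<forall>k. 0 < k \<and> k < n \<longrightarrow> take k a \<noteq> drop (n - k) b)"

definition cw_len :: "nat \<Rightarrow> nat \<Rightarrow> nat" where
  "cw_len c m = nat \<lceil>real c * log 2 (real m)\<rceil>"

definition int_len :: "nat \<Rightarrow> nat \<Rightarrow> nat" where
  "int_len c m = nat \<lceil>2 * real beta * real c * (log 2 (real m))\<^sup>2 + real c * log 2 (real m) - 1\<rceil>"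

text \<open>Markers: the t+1 lexicographically first codewords (all codewords if fewer).\<close>
definition markers :: "bool list set \<Rightarrow> nat \<Rightarrow> bool list set" where
  "markers C t = {w \<in> C. card {v \<in> C. lexordp (<) v w} < t + 1}"

definition legit :: "nat \<Rightarrow> nat \<Rightarrow> bool list set \<Rightarrow> bool list \<Rightarrow> bool" where
  "legit c t C z \<longleftrightarrow>
     (let m = length z; n = cw_len c m; L = int_len c m in
      (\<forall>i. i + L \<le> m \<longrightarrow> (\<exists>w\<in>C. occurs_in w (take L (drop i z)))) \<and>
      (\<forall>i j. i + n \<le> j \<and> j + n \<le> m \<longrightarrow> take n (drop i z) \<noteq> take n (drop j z)) \<and>
      (\<forall>w\<in>markers C t. \<not> occurs_in w z))"

end

theory Submission
  imports Defs
begin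

definition av :: "bool list set \<Rightarrow> nat \<Rightarrow> bool list set" where
  "av C L = {x. length x = L \<and> (\<forall>w\<in>C. \<not> occurs_in w x)}"

lemma card_len: "card {xs::bool list. length xs = k} = 2^k"
  using card_lists_length_eq[of "UNIV::bool set" k] by simp

lemma fin_len: "finite {xs::bool list. length xs = k}"
  using finite_lists_length_eq[of "UNIV::bool set" k] by simp

lemma lex_bridge: "List.lexordp (<) xs ys = ord_class.lexordp (xs::'a::linorder list) ys"
  by (simp add: List.lexordp_def lexordp_conv_lexord)

lemma max_lex:
  fixes S :: "'a::linorder list set"
  assumes "finite S" "S \<noteq> {}"
  shows "\<exists>w\<in>S. \<forall>v\<in>S. v \<noteq> w \<longrightarrow> ord_class.lexordp v w"
  using assms
proof (induction S rule: finite_ne_induct)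
  case (singleton x) then show ?case by auto
next
  case (insert x F)
  then obtain w where w: "w \<in> F" "\<forall>v\<in>F. v \<noteq> w \<longrightarrow> ord_class.lexordp v w" by blast
  show ?case
  proof (cases "ord_class.lexordp x w")
    case True then show ?thesis using w by auto
  next
    case False
    then have "ord_class.lexordp w x" using lexordp_linear[of x w] insert w by auto
    then show ?thesis using w by (auto intro: lexordp_trans)
  qed
qed

lemma markers_alt: "markers C t = {w \<in> C. card {v \<in> C. ord_class.lexordp v w} < t + 1}"
  unfolding markers_def by (simp only: lex_bridge)

lemma card_markers:
  assumes "finite C"
  shows "card (markers C t) \<le> t + 1"
proof (rule ccontr)
  assume A: "\<not> ?thesis"
  have fin: "finite (markers C t)" using assms unfolding markers_alt by auto
  have ne: "markers C t \<noteq> {}" using A by auto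
  obtain w where w: "w \<in> markers C t" "\<forall>v\<in>markers C t. v \<noteq> w \<longrightarrow> ord_class.lexordp v w"
    using max_lex[OF fin ne] by blast
  have "markers C t - {w} \<subseteq> {v \<in> C. ord_class.lexordp v w}"
    using w unfolding markers_alt by auto
  then have "card (markers C t - {w}) \<le> card {v \<in> C. ord_class.lexordp v w}"
    using assms by (intro card_mono) auto
  moreover have "card {v \<in> C. ord_class.lexordp v w} < t + 1" using w(1) unfolding markers_alt by auto
  moreover have "card (markers C t - {w}) = card (markers C t) - 1" using w(1) fin by simp
  ultimately show False using A by linarith
qed

lemma window_card:
  fixes S :: "bool list set"
  assumes "S \<subseteq> {x. length x = L}" "i + L \<le> m"
  shows "card {z::bool list. length z = m \<and> take L (drop i z) \<in> S} \<le> 2^(m-L) * card S"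
proof -
  let ?f = "\<lambda>(a::bool list, s::bool list, c::bool list). a @ s @ c"
  let ?D = "{a::bool list. length a = i} \<times> S \<times> {c::bool list. length c = m - i - L}"
  have finS: "finite S" using assms(1) fin_len finite_subset by blast
  have sub: "{z::bool list. length z = m \<and> take L (drop i z) \<in> S} \<subseteq> ?f ` ?D"
  proof
    fix z :: "bool list" assume z: "z \<in> {z. length z = m \<and> take L (drop i z) \<in> S}"
    have e: "z = take i z @ take L (drop i z) @ drop (i + L) z"
    proof -
      have "z = take i z @ drop i z" by simp
      also have "drop i z = take L (drop i z) @ drop L (drop i z)" by (rule append_take_drop_id[symmetric])
      finally show ?thesis by (simp add: add.commute)
    qed
    have "(take i z, take L (drop i z), drop (i+L) z) \<in> ?D" using z assms by auto
    then show "z \<in> ?f ` ?D" using e by (intro image_eqI[where x="(take i z, take L (drop i z), drop (i+L) z)"]) simp_all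
  qed
  have "card {z::bool list. length z = m \<and> take L (drop i z) \<in> S} \<le> card (?f ` ?D)"
    using sub by (intro card_mono) (auto intro!: finite_cartesian_product fin_len finS)
  also have "\<dots> \<le> card ?D" by (rule card_image_le) (auto intro!: finite_cartesian_product fin_len finS)
  also have "\<dots> = 2^i * (card S * 2^(m-i-L))" by (simp add: card_cartesian_product card_len)
  also have "\<dots> = 2^(m-L) * card S"
  proof -
    have "(2::nat)^i * 2^(m-i-L) = 2^(m-L)" using assms(2) by (simp add: power_add[symmetric])
    then show ?thesis by (metis mult.assoc mult.commute)
  qed
  finally show ?thesis .
qed

lemma pair_card:
  assumes "i + n \<le> j" "j + n \<le> m"
  shows "card {z::bool list. length z = m \<and> take n (drop i z) = take n (drop j z)} \<le> 2^(m-n)"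
proof -
  let ?f = "\<lambda>(a::bool list, c::bool list). a @ take n (drop i a) @ c"
  let ?D = "{a::bool list. length a = j} \<times> {c::bool list. length c = m - j - n}"
  have sub: "{z::bool list. length z = m \<and> take n (drop i z) = take n (drop j z)} \<subseteq> ?f ` ?D"
  proof
    fix z :: "bool list" assume z: "z \<in> {z. length z = m \<and> take n (drop i z) = take n (drop j z)}"
    have "take n (drop i (take j z)) = take n (drop i z)" using assms
      by (simp add: take_drop min_def)
    have e0: "z = take j z @ take n (drop j z) @ drop (j + n) z"
    proof -
      have "z = take j z @ drop j z" by simp
      also have "drop j z = take n (drop j z) @ drop n (drop j z)" by (rule append_take_drop_id[symmetric])
      finally show ?thesis by (simp add: add.commute)
    qed
    have e: "z = take j z @ take n (drop i (take j z)) @ drop (j + n) z"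
      using e0 z \<open>take n (drop i (take j z)) = take n (drop i z)\<close> by simp
    have "(take j z, drop (j+n) z) \<in> ?D" using z assms by auto
    then show "z \<in> ?f ` ?D" using e by (intro image_eqI[where x="(take j z, drop (j+n) z)"]) simp_all
  qed
  have "card {z::bool list. length z = m \<and> take n (drop i z) = take n (drop j z)} \<le> card (?f ` ?D)"
    using sub by (intro card_mono) (auto intro!: finite_cartesian_product fin_len)
  also have "\<dots> \<le> card ?D" by (rule card_image_le) (auto intro!: finite_cartesian_product fin_len)
  also have "\<dots> = 2^j * 2^(m-j-n)" by (simp add: card_cartesian_product card_len)
  also have "\<dots> = 2^(m-n)" using assms by (simp add: power_add[symmetric])
  finally show ?thesis .
qed


lemma occurs_take: "occurs_in w (take k x) \<Longrightarrow> occurs_in w x"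
proof -
  assume "occurs_in w (take k x)"
  then obtain i where i: "i + length w \<le> length (take k x)" "take (length w) (drop i (take k x)) = w"
    unfolding occurs_in_def by blast
  have "take (length w) (drop i (take k x)) = take (length w) (drop i x)"
    using i(1) by (simp add: drop_take min_def split: if_splits)
  then show ?thesis unfolding occurs_in_def using i by (intro exI[of _ i]) auto
qed

lemma occurs_self: "occurs_in w (u @ w)"
  unfolding occurs_in_def by (rule exI[of _ "length u"]) simp

lemma key_MU:
  assumes mu: "MU_code n C" and n: "n \<ge> 1" and u: "u \<in> av C L" and c: "c \<in> C"
  shows "u @ take (n - 1) c \<in> av C (L + n - 1)"
proof -
  have lu: "length u = L" using u unfolding av_def by auto
  have lc: "length c = n" using mu c unfolding MU_code_def by auto
  have "\<not> occurs_in w (u @ take (n - 1) c)" if w: "w \<in> C" for w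
  proof
    assume "occurs_in w (u @ take (n - 1) c)"
    then obtain i where i: "i + length w \<le> length (u @ take (n - 1) c)"
      "take (length w) (drop i (u @ take (n - 1) c)) = w" unfolding occurs_in_def by blast
    have lw: "length w = n" using mu w unfolding MU_code_def by auto
    show False
    proof (cases "i + n \<le> L")
      case True
      then have "take n (drop i u) = w" using i lw lu by simp
      then have "occurs_in w u" unfolding occurs_in_def using True lw lu by auto
      then show False using u w unfolding av_def by auto
    next
      case False
      define k where "k = L - i"
      have k: "0 < k" "k < n" using False i lw lu lc n unfolding k_def by auto
      have "drop k w = take (n - k) c"
      proof -
        have "drop k w = drop k (take n (drop i (u @ take (n - 1) c)))" using i lw by simp
        also have "\<dots> = take (n - k) (drop (k + i) (u @ take (n - 1) c))"
          by (simp only: drop_take drop_drop)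
        also have "\<dots> = take (n - k) (take (n - 1) c)"
          using lu k False unfolding k_def by simp
        also have "\<dots> = take (n - k) c" using k by simp
        finally show ?thesis .
      qed
      moreover have "take (n - k) c \<noteq> drop (n - (n - k)) w"
      proof -
        have "\<forall>a\<in>C. \<forall>b\<in>C. \<forall>k. 0 < k \<and> k < n \<longrightarrow> take k a \<noteq> drop (n - k) b"
          using mu unfolding MU_code_def by blast
        moreover have "0 < n - k \<and> n - k < n" using k by simp
        ultimately show ?thesis using c w by blast
      qed
      ultimately show False using k by simp
    qed
  qed
  then show ?thesis using lu lc n unfolding av_def by auto
qed

lemma av_sub: "av C L \<subseteq> {x. length x = L}" unfolding av_def by auto

lemma av_mono:
  "card (av C (L + k)) \<le> 2^k * card (av C L)"
proof -
  have "av C (L + k) \<subseteq> {z::bool list. length z = L + k \<and> take L (drop 0 z) \<in> av C L}"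
  proof
    fix x assume x: "x \<in> av C (L + k)"
    then have "\<forall>w\<in>C. \<not> occurs_in w (take L x)" unfolding av_def using occurs_take by blast
    then show "x \<in> {z::bool list. length z = L + k \<and> take L (drop 0 z) \<in> av C L}"
      using x unfolding av_def by simp
  qed
  then have "card (av C (L + k)) \<le> card {z::bool list. length z = L + k \<and> take L (drop 0 z) \<in> av C L}"
    by (intro card_mono) (auto intro: finite_subset[OF _ fin_len])
  also have "\<dots> \<le> 2^(L + k - L) * card (av C L)"
    by (rule window_card[OF av_sub]) simp
  finally show ?thesis by simp
qed

lemma av_rec:
  assumes mu: "MU_code n C" and n: "n \<ge> 1"
  shows "card (av C (L + n)) + card (av C L) * card C \<le> 2 * card (av C (L + n - 1))"
proof -
  have finC: "finite C"
    using mu unfolding MU_code_def by (intro finite_subset[OF _ fin_len[of n]]) auto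
  define T where "T = {z::bool list. length z = L + n \<and> take (L + n - 1) (drop 0 z) \<in> av C (L + n - 1)}"
  have cT: "card T \<le> 2 * card (av C (L + n - 1))"
  proof -
    have "card T \<le> 2^(L + n - (L + n - 1)) * card (av C (L + n - 1))"
      unfolding T_def by (rule window_card[OF av_sub]) simp
    then show ?thesis using n by simp
  qed
  have finT: "finite T" unfolding T_def by (auto intro: finite_subset[OF _ fin_len])
  define U where "U = (\<lambda>(u, c). u @ c) ` (av C L \<times> C)"
  have s1: "av C (L + n) \<subseteq> T"
  proof
    fix x assume x: "x \<in> av C (L + n)"
    then have "\<forall>w\<in>C. \<not> occurs_in w (take (L + n - 1) x)" unfolding av_def using occurs_take by blast
    then show "x \<in> T" using x n unfolding av_def T_def by simp
  qed
  have s2: "U \<subseteq> T"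
  proof
    fix x assume "x \<in> U"
    then obtain u c where uc: "u \<in> av C L" "c \<in> C" "x = u @ c" unfolding U_def by auto
    have lu: "length u = L" using uc unfolding av_def by auto
    have lc: "length c = n" using mu uc unfolding MU_code_def by auto
    have "take (L + n - 1) x = u @ take (n - 1) c" using uc lu n by simp
    then show "x \<in> T" unfolding T_def using key_MU[OF mu n uc(1,2)] lu lc uc by simp
  qed
  have disj: "av C (L + n) \<inter> U = {}"
  proof -
    have "x \<notin> av C (L + n)" if "x \<in> U" for x
    proof -
      obtain u c where uc: "c \<in> C" "x = u @ c" using \<open>x \<in> U\<close> unfolding U_def by auto
      then show ?thesis using occurs_self[of c u] unfolding av_def by blast
    qed
    then show ?thesis by blast
  qed
  have inj: "inj_on (\<lambda>(u, c). u @ c) (av C L \<times> C)"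
  proof (rule inj_onI)
    fix x y assume x: "x \<in> av C L \<times> C" and y: "y \<in> av C L \<times> C"
      and e: "(case x of (u, c) \<Rightarrow> u @ c) = (case y of (u, c) \<Rightarrow> u @ c)"
    obtain u c u' c' where xy: "x = (u, c)" "y = (u', c')" by (cases x, cases y) auto
    have "length u = L" "length u' = L" using x y xy unfolding av_def by auto
    then show "x = y" using e xy by simp
  qed
  have cU: "card U = card (av C L) * card C"
    unfolding U_def using card_image[OF inj] by (simp add: card_cartesian_product)
  have "card (av C (L + n)) + card U = card (av C (L + n) \<union> U)"
    using disj finT s1 s2 by (intro card_Un_disjoint[symmetric]) (auto intro: finite_subset)
  also have "\<dots> \<le> card T" using s1 s2 finT by (intro card_mono) auto
  finally show ?thesis using cT cU by simp
qed

lemma cardC_le: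
  assumes mu: "MU_code n C"
  shows "card C \<le> 2^n" "finite C"
proof -
  have "C \<subseteq> {x::bool list. length x = n}" using mu unfolding MU_code_def by auto
  then show "card C \<le> 2^n" "finite C"
    using card_mono[OF fin_len[of n]] card_len[of n] finite_subset[OF _ fin_len[of n]] by auto
qed

lemma av_decay:
  assumes mu: "MU_code (Suc j) C"
  shows "real (card (av C (j + k))) / 2^(j+k) \<le> (1 - real (card C) / 2^(Suc j))^k"
proof (induction k)
  case 0
  have "card (av C j) \<le> 2^j" using card_mono[OF fin_len[of j] av_sub[of C j]] card_len[of j] by simp
  then have "real (card (av C j)) \<le> real (2^j)" by (simp only: of_nat_le_iff)
  then show ?case by simp
next
  case (Suc k)
  define A where "A = (\<lambda>x. real (card (av C x)))"
  define N where "N = real (card C)"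
  define p where "p = N / 2^(Suc j)"
  have p1: "p \<le> 1" "0 \<le> p"
  proof -
    have "real (card C) \<le> real (2^(Suc j))" using cardC_le[OF mu] by (simp only: of_nat_le_iff)
    then show "p \<le> 1" "0 \<le> p" unfolding p_def N_def by auto
  qed
  have rec: "A (k + Suc j) + A k * N \<le> 2 * A (k + j)"
  proof -
    have "card (av C (k + Suc j)) + card (av C k) * card C \<le> 2 * card (av C (k + j))"
      using av_rec[OF mu, of k] by simp
    then have "real (card (av C (k + Suc j)) + card (av C k) * card C) \<le> real (2 * card (av C (k + j)))"
      by (simp only: of_nat_le_iff)
    then show ?thesis unfolding A_def N_def by simp
  qed
  have mono: "A (k + j) \<le> 2^j * A k"
  proof -
    have "real (card (av C (k + j))) \<le> real (2^j * card (av C k))"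
      using av_mono[of C k j] by (simp only: of_nat_le_iff)
    then show ?thesis unfolding A_def by simp
  qed
  have N0: "0 \<le> N" unfolding N_def by simp
  have "A (k + j) / 2^j \<le> A k" using mono by (simp add: field_simps)
  then have "N * (A (k + j) / 2^j) \<le> N * A k" using N0 by (rule mult_left_mono)
  then have s1: "A (j + Suc k) \<le> 2 * A (k + j) - N * (A (k + j) / 2^j)"
    using rec by (simp add: add.commute mult.commute)
  define a where "a = A (j + k) / 2^(j+k)"
  have "A (j + Suc k) / 2^(j + Suc k) \<le> (2 * A (k + j) - N * (A (k + j) / 2^j)) / 2^(j + Suc k)"
    using s1 by (simp add: divide_right_mono)
  also have "\<dots> = (1 - p) * a"
    unfolding a_def p_def by (simp add: field_simps power_add add.commute)
  also have "\<dots> \<le> (1 - p) * (1 - p)^k"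
    using Suc.IH p1 unfolding a_def A_def p_def N_def by (intro mult_left_mono) auto
  finally show ?case unfolding A_def p_def N_def by simp
qed

lemma log_facts:
  assumes m2: "m \<ge> (2::nat)"
  shows "log 2 (real m) \<ge> 1" "ln (real m) \<le> log 2 (real m)"
proof -
  show "log 2 (real m) \<ge> 1" using m2 by (simp add: le_log_iff)
  have l2: "0 < ln (2::real)" "ln (2::real) < 1" using ln_2_less_1 by auto
  have lm: "0 \<le> ln (real m)" using m2 by simp
  have "ln (real m) * ln 2 \<le> ln (real m)" using l2 lm by (simp add: mult_left_le)
  then show "ln (real m) \<le> log 2 (real m)" unfolding log_def using l2 by (simp add: le_divide_eq)
qed

lemma n_facts:
  assumes m2: "m \<ge> (2::nat)" and c3: "c \<ge> (3::nat)"
  shows "real (cw_len c m) \<ge> real c * log 2 (real m)"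
    "real (cw_len c m) \<le> real c * log 2 (real m) + 1"
    "cw_len c m \<ge> 1"
    "(2::real) ^ cw_len c m \<ge> real m ^ 3"
proof -
  define lg where "lg = log 2 (real m)"
  have lg1: "lg \<ge> 1" using log_facts[OF m2] unfolding lg_def by auto
  have c3r: "real c \<ge> 3" using c3 by simp
  have "3 * 1 \<le> real c * lg" by (rule mult_mono) (use c3r lg1 in auto)
  then have cl: "real c * lg \<ge> 3" by simp
  show n1: "real (cw_len c m) \<ge> real c * log 2 (real m)"
    unfolding cw_len_def by (rule real_nat_ceiling_ge)
  show "real (cw_len c m) \<le> real c * log 2 (real m) + 1"
  proof -
    have "0 \<le> \<lceil>real c * lg\<rceil>" using cl by simp
    then have "real (cw_len c m) = real_of_int \<lceil>real c * lg\<rceil>" unfolding cw_len_def lg_def by simp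
    then show ?thesis unfolding lg_def using of_int_ceiling_le_add_one by simp
  qed
  show "cw_len c m \<ge> 1" using n1 cl unfolding lg_def by simp
  have "real m ^ 3 = 2 powr (3 * lg)"
  proof -
    have "2 powr (3 * lg) = (2 powr lg) powr 3" by (simp add: powr_powr mult.commute)
    also have "2 powr lg = real m" unfolding lg_def using m2 by simp
    finally show ?thesis using m2 by (simp add: powr_numeral)
  qed
  also have "\<dots> \<le> 2 powr (real (cw_len c m))"
  proof (rule powr_mono)
    have "3 * lg \<le> real c * lg" using c3 lg1 by (intro mult_right_mono) auto
    then show "3 * lg \<le> real (cw_len c m)" using n1 unfolding lg_def by linarith
  qed simp
  also have "\<dots> = 2 ^ cw_len c m" by (simp add: powr_realpow)
  finally show "(2::real) ^ cw_len c m \<ge> real m ^ 3" .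
qed

lemma window_bound:
  assumes m2: "m \<ge> (2::nat)" and c3: "c \<ge> (3::nat)"
    and mu: "MU_code (cw_len c m) C"
    and cardC: "real (card C) \<ge> 2 ^ (cw_len c m) / (real beta * real c * log 2 (real m))"
  shows "real (card (av C (int_len c m))) / 2 ^ (int_len c m) \<le> 3 / (real m * real m)"
    "int_len c m \<ge> 1"
proof -
  define n where "n = cw_len c m"
  define L where "L = int_len c m"
  define lg where "lg = log 2 (real m)"
  have lg1: "lg \<ge> 1" and lnlg: "ln (real m) \<le> lg" using log_facts[OF m2] unfolding lg_def by auto
  have c3r: "real c \<ge> 3" using c3 by simp
  have hn2: "real n \<le> real c * lg + 1" and n1: "n \<ge> 1"
    using n_facts[OF m2 c3] unfolding n_def lg_def by auto
  obtain j where nj: "n = Suc j" using n1 by (cases n) auto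
  have hL: "real L \<ge> 64 * real c * lg^2 + real c * lg - 1"
    unfolding L_def int_len_def lg_def beta_def
    using real_nat_ceiling_ge[of "2 * real 32 * real c * (log 2 (real m))\<^sup>2 + real c * log 2 (real m) - 1"]
    by simp
  have clg: "real c * lg \<ge> 0" using c3r lg1 by simp
  have big: "64 * real c * lg^2 \<ge> 1"
  proof -
    have "lg^2 \<ge> 1" using lg1 by (simp add: one_le_power)
    then have "real c * lg^2 \<ge> 1 * 1" using c3r by (intro mult_mono) auto
    then show ?thesis by simp
  qed
  have D: "real L - real j \<ge> 64 * real c * lg^2 - 1" using hL hn2 nj by simp
  then have Lj: "j \<le> L" using big by linarith
  define k where "k = L - j"
  have rk: "real k \<ge> 64 * real c * lg^2 - 1" using D Lj unfolding k_def by (simp add: of_nat_diff)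
  have "real c * lg^2 \<ge> 1"
  proof -
    have "lg^2 \<ge> 1" using lg1 by (simp add: one_le_power)
    then have "real c * lg^2 \<ge> 1 * 1" using c3r by (intro mult_mono) auto
    then show ?thesis by simp
  qed
  then have "real L \<ge> 1" using hL clg by linarith
  then have L1: "L \<ge> 1" by simp
  then show "int_len c m \<ge> 1" unfolding L_def .
  define p where "p = real (card C) / 2^n"
  have p1: "p \<le> 1" "0 \<le> p"
  proof -
    have "real (card C) \<le> real (2^n)" using cardC_le[OF mu] unfolding n_def by (simp only: of_nat_le_iff)
    then show "p \<le> 1" "0 \<le> p" unfolding p_def by auto
  qed
  have pl: "p * (32 * real c * lg) \<ge> 1"
  proof -
    have pos: "32 * real c * lg > 0" using c3r lg1 by simp
    have "2^n / (32 * real c * lg) \<le> real (card C)" using cardC unfolding n_def lg_def beta_def by simp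
    then have "2^n \<le> real (card C) * (32 * real c * lg)" using pos by (simp add: divide_le_eq)
    then show ?thesis unfolding p_def by (simp add: field_simps)
  qed
  have pk: "p * real k \<ge> 2 * lg - 1"
  proof -
    have "p * real k \<ge> p * (64 * real c * lg^2 - 1)" using rk p1 by (intro mult_left_mono) auto
    moreover have "p * (64 * real c * lg^2 - 1) = 2 * lg * (p * (32 * real c * lg)) - p"
      by (simp add: algebra_simps power2_eq_square)
    moreover have "2 * lg * (p * (32 * real c * lg)) \<ge> 2 * lg * 1" using pl lg1 by (intro mult_left_mono) auto
    ultimately show ?thesis using p1 by linarith
  qed
  have "real (card (av C L)) / 2 ^ L = real (card (av C (j + k))) / 2 ^ (j + k)"
    unfolding k_def using Lj by simp
  also have "\<dots> \<le> (1 - real (card C) / 2 ^ Suc j) ^ k" using av_decay[of j C k] mu nj n_def by simp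
  also have "\<dots> = (1 - p) ^ k" unfolding p_def nj ..
  also have "\<dots> \<le> exp (- p) ^ k"
    using p1 by (intro power_mono) (auto simp: exp_ge_add_one_self[of "-p", simplified])
  also have "\<dots> = exp (real k * (- p))" by (simp only: exp_of_nat_mult)
  also have "\<dots> \<le> exp (1 - 2 * lg)" using pk by (simp add: mult.commute)
  also have "\<dots> \<le> exp (1 - 2 * ln (real m))" using lnlg by simp
  also have "\<dots> = exp 1 / (exp (ln (real m)) * exp (ln (real m)))"
    by (simp add: exp_diff exp_add[symmetric])
  also have "\<dots> = exp 1 / (real m * real m)" using m2 by simp
  also have "\<dots> \<le> 3 / (real m * real m)" using exp_le m2 by (intro divide_right_mono) auto
  finally show "real (card (av C (int_len c m))) / 2 ^ (int_len c m) \<le> 3 / (real m * real m)"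
    unfolding L_def .
qed

lemma pow2_diff: "a \<le> b \<Longrightarrow> real ((2::nat)^(b - a)) = 2^b / 2^a"
proof -
  assume "a \<le> b"
  then have "(2::real)^(b - a) = 2^b / 2^a" by (simp add: power_diff)
  then show ?thesis by simp
qed

lemma union_bound:
  fixes I :: "'i set" and A :: "'i \<Rightarrow> 'a set"
  assumes "finite I" "\<And>i. i \<in> I \<Longrightarrow> real (card (A i)) \<le> B"
  shows "real (card (\<Union>i\<in>I. A i)) \<le> real (card I) * B"
proof -
  have "card (\<Union>i\<in>I. A i) \<le> (\<Sum>i\<in>I. card (A i))" using assms(1) by (rule card_UN_le)
  then have "real (card (\<Union>i\<in>I. A i)) \<le> real (\<Sum>i\<in>I. card (A i))" by (simp only: of_nat_le_iff)
  also have "\<dots> = (\<Sum>i\<in>I. real (card (A i)))" by simp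
  also have "\<dots> \<le> real (card I) * B" using assms(2) by (rule sum_bounded_above)
  finally show ?thesis .
qed

theorem theorem7:
  fixes c :: nat
  assumes "c \<ge> 3"
  shows "\<exists>K d. K > 0 \<and> d > 0 \<and>
    (\<forall>(m::nat) (t::nat) (C::bool list set).
       1 \<le> t \<longrightarrow> t < m \<longrightarrow>
       MU_code (cw_len c m) C \<longrightarrow>
       real (card C) \<ge> 2 ^ (cw_len c m) / (real beta * real c * log 2 (real m)) \<longrightarrow>
       real (card {z. length z = m \<and> \<not> legit c t C z}) / 2 ^ m \<le> K / real m powr d)"
proof -
  have main: "real (card {z. length z = m \<and> \<not> legit c t C z}) / 2 ^ m \<le> 5 / real m powr 1"
    if t1: "1 \<le> t" and tm: "t < m" and mu: "MU_code (cw_len c m) C"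
    and cardC: "real (card C) \<ge> 2 ^ (cw_len c m) / (real beta * real c * log 2 (real m))"
    for m t :: nat and C :: "bool list set"
  proof -
  have m2: "m \<ge> 2" using t1 tm by simp
  define n where "n = cw_len c m"
  define L where "L = int_len c m"
  have n1: "n \<ge> 1" and nm3: "(2::real) ^ n \<ge> real m ^ 3"
    using n_facts[OF m2 assms] unfolding n_def by auto
  have aL: "real (card (av C L)) / 2 ^ L \<le> 3 / (real m * real m)" and L1: "L \<ge> 1"
    using window_bound[OF m2 assms mu cardC] unfolding L_def by auto
  have finC: "finite C" using cardC_le[OF mu] by simp
  define W where "W = (\<lambda>i. {z::bool list. length z = m \<and> i + L \<le> m \<and> take L (drop i z) \<in> av C L})"
  define P where "P = (\<lambda>(i, j). {z::bool list. length z = m \<and> i + n \<le> j \<and> j + n \<le> m \<and>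
                         take n (drop i z) = take n (drop j z)})"
  define M where "M = (\<lambda>(w, i). {z::bool list. length z = m \<and> i + n \<le> m \<and> take n (drop i z) = w})"
  define B1 where "B1 = (\<Union>i\<in>{..<m}. W i)"
  define B2 where "B2 = (\<Union>ij\<in>{..<m} \<times> {..<m}. P ij)"
  define B3 where "B3 = (\<Union>wi\<in>markers C t \<times> {..<m}. M wi)"
  have sub: "{z. length z = m \<and> \<not> legit c t C z} \<subseteq> B1 \<union> B2 \<union> B3"
  proof
    fix z assume z: "z \<in> {z. length z = m \<and> \<not> legit c t C z}"
    then have lz: "length z = m" by simp
    have nl: "\<not> legit c t C z" using z by simp
    consider (a) "\<exists>i. i + L \<le> m \<and> \<not> (\<exists>w\<in>C. occurs_in w (take L (drop i z)))"
      | (b) "\<exists>i j. i + n \<le> j \<and> j + n \<le> m \<and> take n (drop i z) = take n (drop j z)"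
      | (c) "\<exists>w\<in>markers C t. occurs_in w z"
      using nl lz unfolding legit_def Let_def n_def L_def by blast
    then show "z \<in> B1 \<union> B2 \<union> B3"
    proof cases
      case a
      then obtain i where i: "i + L \<le> m" "\<not> (\<exists>w\<in>C. occurs_in w (take L (drop i z)))" by blast
      have "take L (drop i z) \<in> av C L" using i lz unfolding av_def by auto
      moreover have "i < m" using i L1 by simp
      ultimately have "z \<in> B1" unfolding B1_def W_def using i lz by blast
      then show ?thesis by blast
    next
      case b
      then obtain i j where ij: "i + n \<le> j" "j + n \<le> m" "take n (drop i z) = take n (drop j z)" by blast
      have "i < m" "j < m" using ij n1 by auto
      then have "z \<in> B2" unfolding B2_def P_def using ij lz by blast
      then show ?thesis by blast
    next
      case c
      then obtain w where w: "w \<in> markers C t" "occurs_in w z" by blast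
      have lw: "length w = n" using w(1) mu unfolding markers_def MU_code_def n_def by auto
      obtain i where i: "i + n \<le> m" "take n (drop i z) = w"
        using w(2) lz lw unfolding occurs_in_def by auto
      have "i < m" using i n1 by simp
      then have "z \<in> B3" unfolding B3_def M_def using i lz w(1) by blast
      then show ?thesis by blast
    qed
  qed
  have fin: "finite {z::bool list. length z = m}" by (rule fin_len)
  have c1: "real (card B1) \<le> real m * (2 ^ m * (3 / (real m * real m)))"
  proof -
    have "real (card B1) \<le> real (card {..<m}) * (2 ^ m * (3 / (real m * real m)))"
      unfolding B1_def
    proof (rule union_bound)
      fix i assume "i \<in> {..<m}"
      show "real (card (W i)) \<le> 2 ^ m * (3 / (real m * real m))"
      proof (cases "i + L \<le> m")
        case True
        have "card (W i) \<le> 2^(m - L) * card (av C L)" unfolding W_def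
          using window_card[OF av_sub True] True by simp
        then have "real (card (W i)) \<le> real (2^(m - L) * card (av C L))" by (simp only: of_nat_le_iff)
        also have "\<dots> = 2^m * (real (card (av C L)) / 2^L)"
          using pow2_diff[of L m] True by simp
        also have "\<dots> \<le> 2 ^ m * (3 / (real m * real m))" using aL by (intro mult_left_mono) auto
        finally show ?thesis .
      next
        case False
        then have "W i = {}" unfolding W_def by auto
        then show ?thesis by simp
      qed
    qed simp
    then show ?thesis by simp
  qed
  have c2: "real (card B2) \<le> real m * real m * (2 ^ m / 2 ^ n)"
  proof -
    have "real (card B2) \<le> real (card ({..<m} \<times> {..<m})) * (2 ^ m / 2 ^ n)"
      unfolding B2_def
    proof (rule union_bound)
      fix ij assume "ij \<in> {..<m} \<times> {..<m}"
      obtain i j where ij: "ij = (i, j)" by (cases ij)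
      show "real (card (P ij)) \<le> 2 ^ m / 2 ^ n"
      proof (cases "i + n \<le> j \<and> j + n \<le> m")
        case True
        have "card (P ij) \<le> 2^(m - n)" unfolding P_def ij
          using pair_card[of i n j m] True by simp
        then have "real (card (P ij)) \<le> real (2^(m - n))" by (simp only: of_nat_le_iff)
        also have "\<dots> = 2^m / 2^n" using pow2_diff[of n m] True by simp
        finally show ?thesis .
      next
        case False
        then have "P ij = {}" unfolding P_def ij by auto
        then show ?thesis by simp
      qed
    qed simp
    then show ?thesis by (simp add: card_cartesian_product)
  qed
  have c3: "real (card B3) \<le> real m * real m * (2 ^ m / 2 ^ n)"
  proof -
    have fm: "finite (markers C t)" using finC unfolding markers_def by auto
    have "real (card B3) \<le> real (card (markers C t \<times> {..<m})) * (2 ^ m / 2 ^ n)"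
      unfolding B3_def
    proof (rule union_bound)
      fix wi assume wim: "wi \<in> markers C t \<times> {..<m}"
      obtain w i where wi: "wi = (w, i)" by (cases wi)
      have lw: "length w = n" using wim wi mu unfolding markers_def MU_code_def n_def by auto
      show "real (card (M wi)) \<le> 2 ^ m / 2 ^ n"
      proof (cases "i + n \<le> m")
        case True
        have "M wi = {z::bool list. length z = m \<and> take n (drop i z) \<in> {w}}"
          unfolding M_def wi using True by auto
        then have "card (M wi) \<le> 2^(m - n) * card {w}"
          using window_card[of "{w}" n i m] True lw by simp
        then have "real (card (M wi)) \<le> real (2^(m - n))" by (simp only: of_nat_le_iff) simp
        also have "\<dots> = 2^m / 2^n" using pow2_diff[of n m] True by simp
        finally show ?thesis .
      next
        case False
        then have "M wi = {}" unfolding M_def wi by auto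
        then show ?thesis by simp
      qed
    qed (simp add: fm)
    moreover have "card (markers C t) \<le> m" using card_markers[OF finC, of t] tm by simp
    ultimately have "real (card B3) \<le> real (card (markers C t) * m) * (2 ^ m / 2 ^ n)"
      by (simp add: card_cartesian_product)
    also have "\<dots> \<le> real (m * m) * (2 ^ m / 2 ^ n)"
    proof (rule mult_right_mono)
      have "card (markers C t) * m \<le> m * m" using \<open>card (markers C t) \<le> m\<close> by (rule mult_right_mono) simp
      then show "real (card (markers C t) * m) \<le> real (m * m)" by (simp only: of_nat_le_iff)
    qed simp
    finally show ?thesis by simp
  qed
  have "card {z. length z = m \<and> \<not> legit c t C z} \<le> card (B1 \<union> B2 \<union> B3)"
    by (rule card_mono[OF _ sub]) (auto simp: B1_def B2_def B3_def W_def P_def M_def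
        intro: finite_subset[OF _ fin] split: prod.splits)
  also have "\<dots> \<le> card B1 + card B2 + card B3" by (meson card_Un_le add_le_mono order_trans le_refl)
  finally have cb: "real (card {z. length z = m \<and> \<not> legit c t C z}) \<le> real (card B1) + real (card B2) + real (card B3)"
    by (metis of_nat_add of_nat_le_iff)
  have mpos: "real m > 0" using m2 by simp
  have key: "real m * real m / 2 ^ n \<le> 1 / real m"
  proof -
    have "real m * real m * real m \<le> 2 ^ n" using nm3 by (simp add: power3_eq_cube)
    then show ?thesis using mpos by (simp add: field_simps)
  qed
  have "real (card {z. length z = m \<and> \<not> legit c t C z}) / 2 ^ m
        \<le> (real m * (2 ^ m * (3 / (real m * real m))) + 2 * (real m * real m * (2 ^ m / 2 ^ n))) / 2 ^ m"
    using cb c1 c2 c3 by (intro divide_right_mono) auto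
  also have "\<dots> = 3 / real m + 2 * (real m * real m / 2 ^ n)"
    using mpos by (simp add: field_simps)
  also have "\<dots> \<le> 3 / real m + 2 * (1 / real m)" using key by simp
  also have "\<dots> = 5 / real m powr 1" using mpos by simp
  finally show "real (card {z. length z = m \<and> \<not> legit c t C z}) / 2 ^ m \<le> 5 / real m powr 1" .
  qed
  show ?thesis
    apply (rule exI[of _ 5], rule exI[of _ 1])
    apply (intro conjI)
      apply simp
     apply simp
    apply (intro allI impI)
    apply (rule main)
       apply assumption+
    done
qed

end
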